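(* Let $T\in\mathcal L(\mathcal H)$ be invertible and $C>0$. Let $\mathcal X$ be the set of $x\in\mathcal H$ for which there exist strictly increasing sequences $\{n_k\}_k$ and $\{l_k\}_k$ of positive integers such that the limits $\lim_k\|T^{-l_k}x\|$ and $\lim_k\|T^{n_k}x\|$ exist and $\lim_k\|T^{-l_k}x\|\leq C\lim_k\|T^{n_k}x\|$. If $\mathcal X$ is dense in $\mathcal H$, then $$\sup_{n\geq0}\|T^{-n}\|\leq C\Bigl(\sup_{n\geq0}\|T^n\|\Bigr)^2 .$$
   Context: $\mathcal H$ is a complex Hilbert space. *)

theory Defs
  imports "HOL-Analysis.Analysis" "HOL-Library.Extended_Real"
begin

text \<open>A complex Hilbert space is modelled as a real Hilbert space (a complete real
inner product space) equipped with a complex structure J (multiplication by the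
imaginary unit): J is real-linear, J (J x) = - x, and J is orthogonal. The complex
inner product is then  inner x y + i * inner x (J y)  (up to convention), and the norm
is the same as the real norm.\<close>

definition complex_structure :: "('a::real_inner \<Rightarrow> 'a) \<Rightarrow> bool" where
  "complex_structure J \<longleftrightarrow> linear J \<and> (\<forall>x. J (J x) = - x) \<and> (\<forall>x y. inner (J x) (J y) = inner x y)"

definition bounded_op :: "('a::real_inner \<Rightarrow> 'a) \<Rightarrow> ('a \<Rightarrow> 'a) \<Rightarrow> bool" where
  "bounded_op J T \<longleftrightarrow> bounded_linear T \<and> (\<forall>x. T (J x) = J (T x))"

end

theory Submission
  imports Defs
begin

lemma bl_funpow: "bounded_linear (f::'a::real_normed_vector\<Rightarrow>'a) \<Longrightarrow> bounded_linear (f ^^ n)"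
proof (induction n)
  case 0 then show ?case using bounded_linear_ident by (simp add: id_def)
next
  case (Suc n) then show ?case by (simp add: bounded_linear_compose)
qed

lemma TS_funpow:
  fixes T S :: "'a \<Rightarrow> 'a"
  assumes "T \<circ> S = id" shows "(T ^^ j) ((S ^^ j) y) = y"
proof (induction j arbitrary: y)
  case 0 then show ?case by (simp add: funpow_0)
next
  case (Suc j)
  have "(T ^^ Suc j) ((S ^^ Suc j) y) = T ((T ^^ j) ((S ^^ j) (S y)))"
    by (simp only: funpow.simps(2) comp_apply funpow_swap1)
  also have "\<dots> = y" using Suc assms by (metis comp_apply id_apply)
  finally show ?case .
qed

lemma S_split:
  fixes T S :: "'a \<Rightarrow> 'a"
  assumes "T \<circ> S = id" "m \<le> l" shows "(T ^^ (l - m)) ((S ^^ l) x) = (S ^^ m) x"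
proof -
  have "(S ^^ l) x = (S ^^ (l - m)) ((S ^^ m) x)"
    using assms(2) by (metis funpow_add le_add_diff_inverse2 comp_apply)
  then show ?thesis using TS_funpow[OF assms(1)] by simp
qed

theorem proposition4p4:
  fixes J T S :: "'a::{real_inner, complete_space} \<Rightarrow> 'a" and C :: real
  assumes J: "complex_structure J"
    and T: "bounded_op J T"
    and S: "bounded_op J S" and ST: "S \<circ> T = id" and TS: "T \<circ> S = id"
    and C: "C > 0"
    and dense: "closure {x. \<exists>n l :: nat \<Rightarrow> nat.
                   strict_mono n \<and> strict_mono l \<and> (\<forall>k. 0 < n k \<and> 0 < l k) \<and>
                   convergent (\<lambda>k. norm ((S ^^ l k) x)) \<and>
                   convergent (\<lambda>k. norm ((T ^^ n k) x)) \<and>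
                   lim (\<lambda>k. norm ((S ^^ l k) x)) \<le> C * lim (\<lambda>k. norm ((T ^^ n k) x))} = UNIV"
  shows "(SUP n. ereal (onorm (S ^^ n))) \<le> ereal C * (SUP n. ereal (onorm (T ^^ n))) ^ 2"
proof -
  have blT: "bounded_linear T" and blS: "bounded_linear S"
    using T S by (auto simp: bounded_op_def)
  have blTn: "\<And>n. bounded_linear (T ^^ n)" using bl_funpow[OF blT] .
  have blSn: "\<And>n. bounded_linear (S ^^ n)" using bl_funpow[OF blS] .
  define \<Sigma> where "\<Sigma> = (SUP n. ereal (onorm (T ^^ n)))"
  show ?thesis
  proof (cases "\<Sigma> = \<infinity>")
    case True
    then show ?thesis using C by (simp add: \<Sigma>_def[symmetric] power2_eq_square)
  next
    case False
    have "ereal (onorm (T ^^ 0)) \<le> \<Sigma>" unfolding \<Sigma>_def by (rule SUP_upper) simp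
    moreover have "0 \<le> onorm (T ^^ 0)" using onorm_pos_le[OF blTn] .
    ultimately have "0 \<le> \<Sigma>" by (metis order_trans ereal_less_eq(5))
    with False obtain M where M: "\<Sigma> = ereal M" by (cases \<Sigma>) auto
    have M0: "0 \<le> M" using \<open>0 \<le> \<Sigma>\<close> M by simp
    have Mb: "\<And>n. onorm (T ^^ n) \<le> M"
    proof -
      fix n
      have "ereal (onorm (T ^^ n)) \<le> \<Sigma>" unfolding \<Sigma>_def by (rule SUP_upper) simp
      then show "onorm (T ^^ n) \<le> M" using M by simp
    qed
    have Tn: "\<And>n y. norm ((T ^^ n) y) \<le> M * norm y"
      by (metis Mb blTn onorm mult_right_mono norm_ge_zero order_trans)
    define X where "X = {x. \<exists>n l :: nat \<Rightarrow> nat.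
                   strict_mono n \<and> strict_mono l \<and> (\<forall>k. 0 < n k \<and> 0 < l k) \<and>
                   convergent (\<lambda>k. norm ((S ^^ l k) x)) \<and>
                   convergent (\<lambda>k. norm ((T ^^ n k) x)) \<and>
                   lim (\<lambda>k. norm ((S ^^ l k) x)) \<le> C * lim (\<lambda>k. norm ((T ^^ n k) x))}"
    have bound: "norm ((S ^^ m) x) \<le> (C * M\<^sup>2) * norm x" for m x
    proof -
      have "X \<subseteq> {x. norm ((S ^^ m) x) \<le> (C * M\<^sup>2) * norm x}"
      proof
        fix x assume "x \<in> X"
        then obtain n l :: "nat \<Rightarrow> nat" where l: "strict_mono l"
          and c1: "convergent (\<lambda>k. norm ((S ^^ l k) x))"
          and c2: "convergent (\<lambda>k. norm ((T ^^ n k) x))"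
          and le: "lim (\<lambda>k. norm ((S ^^ l k) x)) \<le> C * lim (\<lambda>k. norm ((T ^^ n k) x))"
          unfolding X_def by blast
        define a where "a = lim (\<lambda>k. norm ((S ^^ l k) x))"
        define b where "b = lim (\<lambda>k. norm ((T ^^ n k) x))"
        have ta: "(\<lambda>k. norm ((S ^^ l k) x)) \<longlonglongrightarrow> a"
          using c1 unfolding a_def by (simp add: convergent_LIMSEQ_iff)
        have tb: "(\<lambda>k. norm ((T ^^ n k) x)) \<longlonglongrightarrow> b"
          using c2 unfolding b_def by (simp add: convergent_LIMSEQ_iff)
        have "(\<lambda>k. M * norm ((S ^^ l k) x)) \<longlonglongrightarrow> M * a"
          by (intro tendsto_mult tendsto_const ta)
        moreover have "\<forall>k\<ge>m. norm ((S ^^ m) x) \<le> M * norm ((S ^^ l k) x)"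
        proof (intro allI impI)
          fix k assume "m \<le> k"
          then have "m \<le> l k" using seq_suble[OF l, of k] by linarith
          then have "(S ^^ m) x = (T ^^ (l k - m)) ((S ^^ l k) x)"
            using S_split[OF TS] by simp
          then show "norm ((S ^^ m) x) \<le> M * norm ((S ^^ l k) x)" using Tn by simp
        qed
        ultimately have h1: "norm ((S ^^ m) x) \<le> M * a"
          by (intro LIMSEQ_le_const) auto
        have h2: "b \<le> M * norm x"
          using tb Tn by (intro LIMSEQ_le_const2) auto
        have "M * a \<le> M * (C * b)" using le M0 unfolding a_def b_def
          by (simp add: mult_left_mono)
        also have "\<dots> \<le> M * (C * (M * norm x))"
          using h2 M0 C by (intro mult_left_mono) auto
        finally show "x \<in> {x. norm ((S ^^ m) x) \<le> (C * M\<^sup>2) * norm x}"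
          using h1 by (simp add: power2_eq_square algebra_simps)
      qed
      moreover have "closed {x. norm ((S ^^ m) x) \<le> (C * M\<^sup>2) * norm x}"
        by (intro closed_Collect_le continuous_intros linear_continuous_on
              bounded_linear.continuous_on blSn)
      ultimately have "closure X \<subseteq> {x. norm ((S ^^ m) x) \<le> (C * M\<^sup>2) * norm x}"
        by (rule closure_minimal)
      then show ?thesis using dense unfolding X_def by auto
    qed
    have "onorm (S ^^ m) \<le> C * M\<^sup>2" for m
      using C M0 by (intro onorm_bound bound) auto
    then have "(SUP n. ereal (onorm (S ^^ n))) \<le> ereal (C * M\<^sup>2)"
      by (intro SUP_least) simp
    also have "\<dots> = ereal C * \<Sigma> ^ 2" using M by (simp add: power2_eq_square)
    finally show ?thesis unfolding \<Sigma>_def .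
  qed
qed

end
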